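(* Let $(X,\mathcal{R})$ be an imprimitive symmetric association scheme with $6$ classes, cometric with respect to the ordering $E_0,\dots,E_6$, with first multiplicity $m>2$ and Krein array $\{m,m-1,1,b_3^*,b_4^*,1;\ 1,c_2^*,m-b_3^*,1,c_5^*,m\}$, where $a_2^*=a_4^*+a_5^*$. Define polynomials $v_i^*$ by $v_0^*(x)=1$, $v_1^*(x)=x$ and $xv_i^*(x)=c_{i+1}^*v_{i+1}^*(x)+a_i^*v_i^*(x)+b_{i-1}^*v_{i-1}^*(x)$ for $1\le i\le 6$, where one sets $c_7^*=1$. Then $$mc_2^*c_3^*c_5^*v_7^*(x)=\bigl(x^3-a_2^*x^2-(m+c_2^*(m-1))x+ma_2^*-a_5^*c_3^*\bigr)(x^2+c_2^*x-m)(x-m)(x+1).$$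
   Context: A symmetric association scheme with $d$ classes is a pair $(X,\mathcal{R})$, $X$ finite, $\mathcal{R}=\{R_0,\dots,R_d\}$ symmetric relations with adjacency matrices $A_i$ such that $A_0=I$, $\sum_iA_i=J$, and each $A_iA_j$ is a linear combination of the $A_h$. Its primitive idempotents are $E_0=\frac1{|X|}J,E_1,\dots,E_d$, Krein parameters $q_{ij}^h$ are defined by $E_i\circ E_j=\frac{1}{|X|}\sum_hq_{ij}^hE_h$ ($\circ$ entrywise product), $m_i=\mathrm{rank}(E_i)$. Imprimitive means some $(X,R_i)$, $1\le i\le d$, is disconnected. Cometric with respect to $E_0,\dots,E_d$ means $q_{ij}^h=0$ if $i+j<h$ and $q_{ij}^h\ne0$ if $i+j=h$. Then $m=m_1$, $a_i^*=q_{1i}^i$, $b_i^*=q_{1,i+1}^i$, $c_i^*=q_{1,i-1}^i$, with $a_i^*+b_i^*+c_i^*=m$, and the Krein array is $\{b_0^*,\dots,b_{d-1}^*;c_1^*,\dots,c_d^*\}$. In the given situation, $c_3^*=m-b_3^*$ and $a_1^*=a_3^*=a_6^*=0$. *)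

theory Defs
  imports Complex_Main "HOL-Computational_Algebra.Polynomial"
begin

text \<open>Square matrices over the finite point set X are represented as functions
  'a => 'a => real; only their entries at points of X matter.\<close>

definition mmult :: "'a set \<Rightarrow> ('a \<Rightarrow> 'a \<Rightarrow> real) \<Rightarrow> ('a \<Rightarrow> 'a \<Rightarrow> real) \<Rightarrow> 'a \<Rightarrow> 'a \<Rightarrow> real" where
  "mmult X M N = (\<lambda>x y. \<Sum>z\<in>X. M x z * N z y)"

definition adj :: "('a \<Rightarrow> 'a \<Rightarrow> nat) \<Rightarrow> nat \<Rightarrow> 'a \<Rightarrow> 'a \<Rightarrow> real" where
  "adj R i = (\<lambda>x y. if R x y = i then 1 else 0)"

definition mrank :: "'a set \<Rightarrow> ('a \<Rightarrow> 'a \<Rightarrow> real) \<Rightarrow> nat" where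
  "mrank X M = Max {card S | S. S \<subseteq> X \<and>
     (\<forall>c :: 'a \<Rightarrow> real. (\<forall>x\<in>X. (\<Sum>y\<in>S. c y * M x y) = 0) \<longrightarrow> (\<forall>y\<in>S. c y = 0))}"

text \<open>Symmetric association scheme with d classes: the relation R_i is
  {(x,y) in X x X. R x y = i}, for i = 0..d.\<close>
definition sym_assoc_scheme :: "'a set \<Rightarrow> nat \<Rightarrow> ('a \<Rightarrow> 'a \<Rightarrow> nat) \<Rightarrow> bool" where
  "sym_assoc_scheme X d R \<longleftrightarrow>
     finite X \<and> X \<noteq> {} \<and>
     (\<forall>x\<in>X. \<forall>y\<in>X. R x y \<le> d) \<and>
     (\<forall>i\<le>d. \<exists>x\<in>X. \<exists>y\<in>X. R x y = i) \<and>
     (\<forall>x\<in>X. \<forall>y\<in>X. R x y = 0 \<longleftrightarrow> x = y) \<and>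
     (\<forall>x\<in>X. \<forall>y\<in>X. R x y = R y x) \<and>
     (\<forall>i\<le>d. \<forall>j\<le>d. \<exists>p :: nat \<Rightarrow> real. \<forall>x\<in>X. \<forall>y\<in>X.
        mmult X (adj R i) (adj R j) x y = (\<Sum>h\<le>d. p h * adj R h x y))"

definition primitive_idempotents ::
  "'a set \<Rightarrow> nat \<Rightarrow> ('a \<Rightarrow> 'a \<Rightarrow> nat) \<Rightarrow> (nat \<Rightarrow> 'a \<Rightarrow> 'a \<Rightarrow> real) \<Rightarrow> bool" where
  "primitive_idempotents X d R E \<longleftrightarrow>
     (\<forall>x\<in>X. \<forall>y\<in>X. E 0 x y = 1 / real (card X)) \<and>
     (\<forall>i\<le>d. \<exists>c :: nat \<Rightarrow> real. \<forall>x\<in>X. \<forall>y\<in>X. E i x y = (\<Sum>h\<le>d. c h * adj R h x y)) \<and>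
     (\<forall>i\<le>d. \<exists>x\<in>X. \<exists>y\<in>X. E i x y \<noteq> 0) \<and>
     (\<forall>i\<le>d. \<forall>j\<le>d. \<forall>x\<in>X. \<forall>y\<in>X.
        mmult X (E i) (E j) x y = (if i = j then E i x y else 0)) \<and>
     (\<forall>x\<in>X. \<forall>y\<in>X. (\<Sum>i\<le>d. E i x y) = (if x = y then 1 else 0))"

definition krein_params ::
  "'a set \<Rightarrow> nat \<Rightarrow> (nat \<Rightarrow> 'a \<Rightarrow> 'a \<Rightarrow> real) \<Rightarrow> (nat \<Rightarrow> nat \<Rightarrow> nat \<Rightarrow> real) \<Rightarrow> bool" where
  "krein_params X d E q \<longleftrightarrow>
     (\<forall>i\<le>d. \<forall>j\<le>d. \<forall>x\<in>X. \<forall>y\<in>X.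
        E i x y * E j x y = (1 / real (card X)) * (\<Sum>h\<le>d. q i j h * E h x y))"

definition cometric :: "nat \<Rightarrow> (nat \<Rightarrow> nat \<Rightarrow> nat \<Rightarrow> real) \<Rightarrow> bool" where
  "cometric d q \<longleftrightarrow> (\<forall>i\<le>d. \<forall>j\<le>d. \<forall>h\<le>d.
     (i + j < h \<longrightarrow> q i j h = 0) \<and> (i + j = h \<longrightarrow> q i j h \<noteq> 0))"

definition imprimitive :: "'a set \<Rightarrow> nat \<Rightarrow> ('a \<Rightarrow> 'a \<Rightarrow> nat) \<Rightarrow> bool" where
  "imprimitive X d R \<longleftrightarrow> (\<exists>i\<in>{1..d}. \<not> (\<forall>x\<in>X. \<forall>y\<in>X.
     (x, y) \<in> {(u, v). u \<in> X \<and> v \<in> X \<and> R u v = i}\<^sup>*))"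

definition astar :: "(nat \<Rightarrow> nat \<Rightarrow> nat \<Rightarrow> real) \<Rightarrow> nat \<Rightarrow> real" where
  "astar q i = q 1 i i"
definition bstar :: "(nat \<Rightarrow> nat \<Rightarrow> nat \<Rightarrow> real) \<Rightarrow> nat \<Rightarrow> real" where
  "bstar q i = q 1 (i + 1) i"
definition cstar :: "(nat \<Rightarrow> nat \<Rightarrow> nat \<Rightarrow> real) \<Rightarrow> nat \<Rightarrow> real" where
  "cstar q i = q 1 (i - 1) i"

fun vstar :: "(nat \<Rightarrow> real) \<Rightarrow> (nat \<Rightarrow> real) \<Rightarrow> (nat \<Rightarrow> real) \<Rightarrow> nat \<Rightarrow> real poly" where
  "vstar a b c 0 = 1"
| "vstar a b c (Suc 0) = [:0, 1:]"
| "vstar a b c (Suc (Suc i)) =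
     smult (1 / c (Suc (Suc i)))
       ([:0, 1:] * vstar a b c (Suc i) - smult (a (Suc i)) (vstar a b c (Suc i))
        - smult (b i) (vstar a b c i))"

end

theory Submission
  imports Defs
begin

lemma E_sym:
  assumes S: "sym_assoc_scheme X d R" and P: "primitive_idempotents X d R E"
    and i: "i \<le> d" and x: "x \<in> X" and y: "y \<in> X"
  shows "E i y x = E i x y"
proof -
  from P i obtain c where c: "\<forall>x\<in>X. \<forall>y\<in>X. E i x y = (\<Sum>h\<le>d. c h * adj R h x y)"
    unfolding primitive_idempotents_def by blast
  have "R x y = R y x" using S x y unfolding sym_assoc_scheme_def by blast
  then show ?thesis using c x y by (simp add: adj_def)
qed

lemma E_diag:
  assumes S: "sym_assoc_scheme X d R" and P: "primitive_idempotents X d R E"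
    and i: "i \<le> d" and x: "x \<in> X" and y: "y \<in> X"
  shows "E i x x = E i y y"
proof -
  from P i obtain c where c: "\<forall>x\<in>X. \<forall>y\<in>X. E i x y = (\<Sum>h\<le>d. c h * adj R h x y)"
    unfolding primitive_idempotents_def by blast
  have "R x x = 0" "R y y = 0" using S x y unfolding sym_assoc_scheme_def by blast+
  then show ?thesis using c x y by (simp add: adj_def)
qed

lemma orth:
  assumes S: "sym_assoc_scheme X d R" and P: "primitive_idempotents X d R E"
    and i: "i \<le> d" and j: "j \<le> d"
  shows "(\<Sum>x\<in>X. \<Sum>y\<in>X. E i x y * E j x y) = (if i = j then (\<Sum>x\<in>X. E i x x) else 0)"
proof -
  have "(\<Sum>x\<in>X. \<Sum>y\<in>X. E i x y * E j x y) = (\<Sum>x\<in>X. mmult X (E i) (E j) x x)"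
    unfolding mmult_def
    by (intro sum.cong refl) (simp add: E_sym[OF S P j])
  also have "\<dots> = (\<Sum>x\<in>X. if i = j then E i x x else 0)"
    using P i j unfolding primitive_idempotents_def by (intro sum.cong refl) blast
  finally show ?thesis by simp
qed

lemma tr_pos:
  assumes S: "sym_assoc_scheme X d R" and P: "primitive_idempotents X d R E"
    and i: "i \<le> d"
  shows "(\<Sum>x\<in>X. E i x x) > 0"
proof -
  have fin: "finite X" using S unfolding sym_assoc_scheme_def by blast
  from P i obtain x0 y0 where xy: "x0 \<in> X" "y0 \<in> X" "E i x0 y0 \<noteq> 0"
    unfolding primitive_idempotents_def by blast
  have "(\<Sum>x\<in>X. \<Sum>y\<in>X. E i x y * E i x y) > 0"
  proof (rule sum_pos2[OF fin xy(1)])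
    show "0 < (\<Sum>y\<in>X. E i x0 y * E i x0 y)"
      by (rule sum_pos2[OF fin xy(2)]) (use xy in \<open>auto simp: zero_less_mult_iff\<close>)
    show "\<And>x. x \<in> X \<Longrightarrow> 0 \<le> (\<Sum>y\<in>X. E i x y * E i x y)"
      by (intro sum_nonneg) auto
  qed
  then show ?thesis using orth[OF S P i i] by simp
qed

lemma triple:
  assumes S: "sym_assoc_scheme X d R" and P: "primitive_idempotents X d R E"
    and K: "krein_params X d E q"
    and d1: "1 \<le> d" and j: "j \<le> d" and h: "h \<le> d"
  shows "(\<Sum>x\<in>X. \<Sum>y\<in>X. E 1 x y * E j x y * E h x y)
        = q 1 j h * (\<Sum>x\<in>X. E h x x) / real (card X)"
proof -
  have "(\<Sum>x\<in>X. \<Sum>y\<in>X. E 1 x y * E j x y * E h x y)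
     = (\<Sum>x\<in>X. \<Sum>y\<in>X. \<Sum>k\<le>d. (q 1 j k / real (card X)) * (E k x y * E h x y))"
  proof (intro sum.cong refl)
    fix x y assume "x \<in> X" "y \<in> X"
    then have "E 1 x y * E j x y = (1 / real (card X)) * (\<Sum>k\<le>d. q 1 j k * E k x y)"
      using K d1 j unfolding krein_params_def by blast
    then show "E 1 x y * E j x y * E h x y = (\<Sum>k\<le>d. (q 1 j k / real (card X)) * (E k x y * E h x y))"
      by (simp add: sum_distrib_left sum_distrib_right mult_ac)
  qed
  also have "\<dots> = (\<Sum>k\<le>d. (q 1 j k / real (card X)) * (\<Sum>x\<in>X. \<Sum>y\<in>X. E k x y * E h x y))"
    by (simp add: sum_distrib_left sum.swap[where A = X and B = "{..d}"])
  also have "\<dots> = (\<Sum>k\<le>d. if k = h then (q 1 j h / real (card X)) * (\<Sum>x\<in>X. E h x x) else 0)"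
    by (intro sum.cong refl) (simp add: orth[OF S P _ h])
  also have "\<dots> = q 1 j h * (\<Sum>x\<in>X. E h x x) / real (card X)"
    using h by simp
  finally show ?thesis .
qed

lemma qswap:
  assumes S: "sym_assoc_scheme X d R" and P: "primitive_idempotents X d R E"
    and K: "krein_params X d E q"
    and d1: "1 \<le> d" and j: "j \<le> d" and h: "h \<le> d"
  shows "q 1 j h * (\<Sum>x\<in>X. E h x x) = q 1 h j * (\<Sum>x\<in>X. E j x x)"
proof -
  have n: "real (card X) \<noteq> 0" using S unfolding sym_assoc_scheme_def by auto
  have "(\<Sum>x\<in>X. \<Sum>y\<in>X. E 1 x y * E j x y * E h x y) = (\<Sum>x\<in>X. \<Sum>y\<in>X. E 1 x y * E h x y * E j x y)"
    by (simp add: mult_ac)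
  then show ?thesis using triple[OF S P K d1 j h] triple[OF S P K d1 h j] n
    by (simp add: field_simps)
qed

lemma qsum:
  assumes S: "sym_assoc_scheme X d R" and P: "primitive_idempotents X d R E"
    and K: "krein_params X d E q"
    and d1: "1 \<le> d" and h: "h \<le> d"
  shows "(\<Sum>j\<le>d. q 1 j h) = (\<Sum>x\<in>X. E 1 x x)"
proof -
  have fin: "finite X" and ne: "X \<noteq> {}" using S unfolding sym_assoc_scheme_def by auto
  then obtain x0 where x0: "x0 \<in> X" by blast
  define n where "n = real (card X)"
  have n: "n \<noteq> 0" using fin ne unfolding n_def by auto
  define D where "D = E 1 x0 x0"
  define t where "t k = (\<Sum>j\<le>d. q 1 j k) / n - D" for k
  have A: "(\<Sum>k\<le>d. t k * E k x y) = 0" if x: "x \<in> X" and y: "y \<in> X" for x y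
  proof -
    have "(\<Sum>j\<le>d. E 1 x y * E j x y) = E 1 x y * (\<Sum>j\<le>d. E j x y)"
      by (simp add: sum_distrib_left)
    also have "\<dots> = (if x = y then D else 0)"
      using P x y E_diag[OF S P d1 x x0] unfolding primitive_idempotents_def D_def by auto
    also have "\<dots> = D * (\<Sum>k\<le>d. E k x y)"
      using P x y unfolding primitive_idempotents_def by auto
    finally have 1: "(\<Sum>j\<le>d. E 1 x y * E j x y) = D * (\<Sum>k\<le>d. E k x y)" .
    have "(\<Sum>j\<le>d. E 1 x y * E j x y) = (\<Sum>j\<le>d. \<Sum>k\<le>d. q 1 j k / n * E k x y)"
    proof (intro sum.cong refl)
      fix j assume "j \<in> {..d}"
      then have "E 1 x y * E j x y = (1 / n) * (\<Sum>k\<le>d. q 1 j k * E k x y)"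
        using K d1 x y unfolding krein_params_def n_def by auto
      then show "E 1 x y * E j x y = (\<Sum>k\<le>d. q 1 j k / n * E k x y)"
        by (simp add: sum_distrib_left)
    qed
    also have "\<dots> = (\<Sum>k\<le>d. (\<Sum>j\<le>d. q 1 j k) / n * E k x y)"
      by (subst sum.swap) (simp add: sum_distrib_right sum_divide_distrib)
    finally have 2: "(\<Sum>k\<le>d. (\<Sum>j\<le>d. q 1 j k) / n * E k x y) = D * (\<Sum>k\<le>d. E k x y)"
      using 1 by simp
    show ?thesis unfolding t_def using 2
      by (simp add: left_diff_distrib sum_subtractf sum_distrib_left)
  qed
  from P h obtain x y where xy: "x \<in> X" "y \<in> X" "E h x y \<noteq> 0"
    unfolding primitive_idempotents_def by blast
  have "0 = (\<Sum>z\<in>X. (\<Sum>k\<le>d. t k * E k x z) * E h z y)"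
    using A xy by simp
  also have "\<dots> = (\<Sum>k\<le>d. t k * mmult X (E k) (E h) x y)"
    unfolding mmult_def
    by (simp add: sum_distrib_left sum_distrib_right sum.swap[where A = X] mult_ac)
  also have "\<dots> = (\<Sum>k\<le>d. if k = h then t h * E h x y else 0)"
    using P h xy unfolding primitive_idempotents_def by (intro sum.cong refl) auto
  also have "\<dots> = t h * E h x y" using h by simp
  finally have "t h = 0" using xy by simp
  then have "(\<Sum>j\<le>d. q 1 j h) = n * D" unfolding t_def using n by (simp add: field_simps)
  also have "\<dots> = (\<Sum>x\<in>X. E 1 x x)"
    unfolding n_def D_def using E_diag[OF S P d1 _ x0] by simp
  finally show ?thesis .
qed

lemma sum7: "(\<Sum>j\<le>(6::nat). f j) = f 0 + f 1 + f 2 + f 3 + f 4 + f 5 + (f 6 :: real)"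
  by (simp add: eval_nat_numeral)


lemma alg:
  fixes a b c :: "nat \<Rightarrow> real" and m c2 c3 c5 :: real
  assumes "a (Suc 0) = 0" "a 3 = 0" "a 6 = 0" "a 2 = m - 1 - c2" "a 4 = c5 - c2" "a 5 = m - 1 - c5"
   "b 0 = m" "b (Suc 0) = m - 1" "b 2 = 1" "b 3 = m - c3" "b 4 = m - 1 + c2 - c5" "b 5 = 1"
   "c 2 = c2" "c 3 = c3" "c 4 = 1" "c 5 = c5" "c 6 = m" "c 7 = 1"
   "c2 \<noteq> 0" "c3 \<noteq> 0" "c5 \<noteq> 0" "m \<noteq> 0"
  shows "smult (m * c2 * c3 * c5) (vstar a b c 7) =
    [:m * a 2 - a 5 * c3, - (m + c2 * (m - 1)), - a 2, 1:]
    * [:- m, c2, 1:] * [:- m, 1:] * [:1, 1:]"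
proof -
  have e: "vstar a b c 7 = smult (1 / c 7) ([:0, 1:] * vstar a b c 6 - smult (a 6) (vstar a b c 6) - smult (b 5) (vstar a b c 5))"
    "vstar a b c 6 = smult (1 / c 6) ([:0, 1:] * vstar a b c 5 - smult (a 5) (vstar a b c 5) - smult (b 4) (vstar a b c 4))"
    "vstar a b c 5 = smult (1 / c 5) ([:0, 1:] * vstar a b c 4 - smult (a 4) (vstar a b c 4) - smult (b 3) (vstar a b c 3))"
    "vstar a b c 4 = smult (1 / c 4) ([:0, 1:] * vstar a b c 3 - smult (a 3) (vstar a b c 3) - smult (b 2) (vstar a b c 2))"
    "vstar a b c 3 = smult (1 / c 3) ([:0, 1:] * vstar a b c 2 - smult (a 2) (vstar a b c 2) - smult (b 1) (vstar a b c 1))"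
    "vstar a b c 2 = smult (1 / c 2) ([:0, 1:] * vstar a b c 1 - smult (a 1) (vstar a b c 1) - smult (b 0) (vstar a b c 0))"
    "vstar a b c 1 = [:0,1:]"
    by (simp_all add: numeral_eq_Suc)
  show ?thesis
    apply (simp only: e)
    apply (simp add: assms)
    apply (intro conjI)
    apply (simp_all add: field_simps assms)
    done
qed

theorem lemma4p1:
  fixes X :: "'a set" and R :: "'a \<Rightarrow> 'a \<Rightarrow> nat"
    and E :: "nat \<Rightarrow> 'a \<Rightarrow> 'a \<Rightarrow> real" and q :: "nat \<Rightarrow> nat \<Rightarrow> nat \<Rightarrow> real"
    and m c2 b3 b4 c5 :: real
  assumes scheme: "sym_assoc_scheme X 6 R"
    and imprim: "imprimitive X 6 R"
    and idem: "primitive_idempotents X 6 R E"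
    and krein: "krein_params X 6 E q"
    and comet: "cometric 6 q"
    and mult: "m = real (mrank X (E 1))"
    and m_gt: "m > 2"
    and b_arr: "bstar q 0 = m" "bstar q 1 = m - 1" "bstar q 2 = 1"
               "bstar q 3 = b3" "bstar q 4 = b4" "bstar q 5 = 1"
    and c_arr: "cstar q 1 = 1" "cstar q 2 = c2" "cstar q 3 = m - b3"
               "cstar q 4 = 1" "cstar q 5 = c5" "cstar q 6 = m"
    and a_rel: "astar q 2 = astar q 4 + astar q 5"
  shows "smult (m * c2 * cstar q 3 * c5) (vstar (astar q) (bstar q) ((cstar q)(7 := 1)) 7) =
    [:m * astar q 2 - astar q 5 * cstar q 3, - (m + c2 * (m - 1)), - astar q 2, 1:]
    * [:- m, c2, 1:] * [:- m, 1:] * [:1, 1:]"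
proof -
  define tr where "tr i = (\<Sum>x\<in>X. E i x x)" for i
  have d1: "(1::nat) \<le> 6" by simp
  have fin: "finite X" and ne: "X \<noteq> {}" using scheme unfolding sym_assoc_scheme_def by auto
  have tr0: "tr 0 = 1"
    using idem fin ne unfolding primitive_idempotents_def tr_def by simp
  have q110: "q 1 1 0 = m" using b_arr(1) unfolding bstar_def by simp
  have q101: "q 1 0 1 = 1" using c_arr(1) unfolding cstar_def by simp
  have "q 1 1 0 * tr 0 = q 1 0 1 * tr 1"
    unfolding tr_def by (rule qswap[OF scheme idem krein d1]) auto
  then have tr1: "tr 1 = m" using tr0 q110 q101 by simp
  have zero: "q 1 j h = 0" if "j \<le> 6" "h \<le> 6" "h + 1 < j \<or> j + 1 < h" for j h
  proof (cases "j + 1 < h")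
    case True then show ?thesis using comet that unfolding cometric_def by auto
  next
    case False
    then have "h + 1 < j" using that by simp
    then have "q 1 h j = 0" using comet that unfolding cometric_def by auto
    moreover have "q 1 j h * tr h = q 1 h j * tr j"
      unfolding tr_def by (rule qswap[OF scheme idem krein d1 that(1,2)])
    moreover have "tr h > 0" unfolding tr_def by (rule tr_pos[OF scheme idem that(2)])
    ultimately show ?thesis by simp
  qed
  have S: "(\<Sum>j\<le>6. q 1 j h) = m" if "h \<le> 6" for h
    using qsum[OF scheme idem krein d1 that] tr1 unfolding tr_def by simp
  have nz: "q 1 (h - 1) h \<noteq> 0" if "1 \<le> h" "h \<le> 6" for h
    using comet that unfolding cometric_def by auto
  have z: "q 1 j h = 0" if "j \<le> 6" "h \<le> 6" "h + 1 < j \<or> j + 1 < h" for j h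
    using zero that by blast
  have s1: "q 1 0 1 + q 1 1 1 + q 1 2 1 = m" using S[of 1] z[of 3 1] z[of 4 1] z[of 5 1] z[of 6 1]
    by (simp add: sum7)
  have s2: "q 1 1 2 + q 1 2 2 + q 1 3 2 = m" using S[of 2] z[of 0 2] z[of 4 2] z[of 5 2] z[of 6 2]
    by (simp add: sum7)
  have s3: "q 1 2 3 + q 1 3 3 + q 1 4 3 = m" using S[of 3] z[of 0 3] z[of 1 3] z[of 5 3] z[of 6 3]
    by (simp add: sum7)
  have s4: "q 1 3 4 + q 1 4 4 + q 1 5 4 = m" using S[of 4] z[of 0 4] z[of 1 4] z[of 2 4] z[of 6 4]
    by (simp add: sum7)
  have s5: "q 1 4 5 + q 1 5 5 + q 1 6 5 = m" using S[of 5] z[of 0 5] z[of 1 5] z[of 2 5] z[of 3 5]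
    by (simp add: sum7)
  have s6: "q 1 5 6 + q 1 6 6 = m" using S[of 6] z[of 0 6] z[of 1 6] z[of 2 6] z[of 3 6] z[of 4 6]
    by (simp add: sum7)
  have bq: "q 1 2 1 = m - 1" "q 1 3 2 = 1" "q 1 4 3 = b3" "q 1 5 4 = b4" "q 1 6 5 = 1"
    using b_arr unfolding bstar_def by (simp_all add: numeral_eq_Suc)
  have cq: "q 1 1 2 = c2" "q 1 2 3 = m - b3" "q 1 3 4 = 1" "q 1 4 5 = c5" "q 1 5 6 = m"
    using c_arr unfolding cstar_def by (simp_all add: numeral_eq_Suc)
  have c2nz: "c2 \<noteq> 0" using nz[of 2] cq by simp
  have c3nz: "m - b3 \<noteq> 0" using nz[of 3] cq by simp
  have c5nz: "c5 \<noteq> 0" using nz[of 5] cq by simp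
  have a1: "astar q (Suc 0) = 0" using s1 q101 bq unfolding astar_def by simp
  have a2: "astar q 2 = m - 1 - c2" using s2 bq cq unfolding astar_def by simp
  have a3: "astar q 3 = 0" using s3 bq cq unfolding astar_def by simp
  have a5: "astar q 5 = m - 1 - c5" using s5 bq cq unfolding astar_def by simp
  have a6: "astar q 6 = 0" using s6 bq cq unfolding astar_def by simp
  have a4: "astar q 4 = c5 - c2" using a_rel a2 a5 by simp
  have b4: "b4 = m - 1 + c2 - c5" using s4 bq cq a4 unfolding astar_def by simp
  show ?thesis
    by (rule alg) (use a1 a2 a3 a4 a5 a6 b_arr c_arr b4 c2nz c3nz c5nz m_gt in auto)
qed

end
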